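(* Let $A$ and $B$ be disjoint cubic graphs with $v(A)\equiv 0\pmod 6$ and $v(B)\equiv 0\pmod 6$, let $a=a_1a_2\in E(A)$ and $b=b_1b_2\in E(B)$. Suppose $A$ has no $\Lambda$-factor containing $a$, and $B$ has no $\Lambda$-factor avoiding $b$. Let $G=AabB$. Then $v(G)\equiv 0\pmod 6$ and $G$ has no $\Lambda$-factor.
   Context: Graphs are finite, undirected, without loops or multiple edges; $v(G)=|V(G)|$. For disjoint graphs $A,B$ with $a=a_1a_2\in E(A)$, $b=b_1b_2\in E(B)$, $AabB$ is obtained from $(A-a)\cup(B-b)$ (edge deletions) by adding the new edges $a_1b_1$ and $a_2b_2$. A $\Lambda$-factor of a graph is a spanning subgraph each of whose components is a path on 3 vertices; it contains (avoids) an edge $e$ if $e$ is (is not) one of its edges. *)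

theory Defs
  imports Main
begin

definition simple_graph :: "'a set \<Rightarrow> 'a set set \<Rightarrow> bool" where
  "simple_graph V E \<longleftrightarrow> finite V \<and>
     (\<forall>e\<in>E. \<exists>u w. u \<noteq> w \<and> u \<in> V \<and> w \<in> V \<and> e = {u, w})"

definition degree :: "'a set set \<Rightarrow> 'a \<Rightarrow> nat" where
  "degree E v = card {e \<in> E. v \<in> e}"

definition cubic :: "'a set \<Rightarrow> 'a set set \<Rightarrow> bool" where
  "cubic V E \<longleftrightarrow> simple_graph V E \<and> (\<forall>v\<in>V. degree E v = 3)"

definition join_verts :: "'a set \<Rightarrow> 'a set \<Rightarrow> 'a set" where
  "join_verts VA VB = VA \<union> VB"

definition join_edges :: "'a set set \<Rightarrow> 'a \<Rightarrow> 'a \<Rightarrow> 'a set set \<Rightarrow> 'a \<Rightarrow> 'a \<Rightarrow> 'a set set" where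
  "join_edges EA a1 a2 EB b1 b2 =
     (EA - {{a1, a2}}) \<union> (EB - {{b1, b2}}) \<union> {{a1, b1}, {a2, b2}}"

definition adjrel :: "'a set set \<Rightarrow> ('a \<times> 'a) set" where
  "adjrel F = {(u, w). {u, w} \<in> F}"

definition component :: "'a set set \<Rightarrow> 'a \<Rightarrow> 'a set" where
  "component F v = {w. (v, w) \<in> (adjrel F)\<^sup>*}"

definition is_path3 :: "'a set set \<Rightarrow> 'a set \<Rightarrow> bool" where
  "is_path3 F S \<longleftrightarrow> (\<exists>x y z. x \<noteq> y \<and> y \<noteq> z \<and> x \<noteq> z \<and> S = {x, y, z} \<and>
       {e \<in> F. e \<subseteq> S} = {{x, y}, {y, z}})"

definition lambda_factor :: "'a set \<Rightarrow> 'a set set \<Rightarrow> 'a set set \<Rightarrow> bool" where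
  "lambda_factor V E F \<longleftrightarrow> F \<subseteq> E \<and> (\<forall>v\<in>V. is_path3 F (component F v))"

end

theory Submission
  imports Defs
begin



definition closedF :: "'a set set \<Rightarrow> 'a set \<Rightarrow> bool" where
  "closedF F S \<longleftrightarrow> (\<forall>e\<in>F. e \<inter> S \<noteq> {} \<longrightarrow> e \<subseteq> S)"

lemma comp_eq:
  assumes p: "is_path3 F S" and v: "v \<in> S" and c: "closedF F S"
  shows "component F v = S"
proof
  show "component F v \<subseteq> S"
  proof
    fix w assume "w \<in> component F v"
    hence "(v,w) \<in> (adjrel F)\<^sup>*" by (simp add: component_def)
    thus "w \<in> S"
    proof (induction rule: rtrancl_induct)
      case base show ?case using v .
    next
      case (step y z)
      have F1: "{y,z} \<in> F" using step.hyps(2) by (simp add: adjrel_def)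
      have ne: "{y,z} \<inter> S \<noteq> {}" using step.IH by blast
      have "\<forall>e\<in>F. e \<inter> S \<noteq> {} \<longrightarrow> e \<subseteq> S" using c by (simp add: closedF_def)
      hence "{y,z} \<subseteq> S" using F1 ne by (meson)
      thus ?case by simp
    qed
  qed
next
  from p obtain x y z where xyz: "S = {x,y,z}" "{x,y} \<in> F" "{y,z} \<in> F"
    unfolding is_path3_def by blast
  have r: "(a,b) \<in> (adjrel F)\<^sup>*" if "{a,b} \<in> F" for a b
    using that by (intro r_into_rtrancl) (simp add: adjrel_def)
  have r': "(b,a) \<in> (adjrel F)\<^sup>*" if "{a,b} \<in> F" for a b
    using that by (intro r_into_rtrancl) (simp add: adjrel_def insert_commute)
  have 1: "(x,y) \<in> (adjrel F)\<^sup>*" "(y,x) \<in> (adjrel F)\<^sup>*"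
    "(y,z) \<in> (adjrel F)\<^sup>*" "(z,y) \<in> (adjrel F)\<^sup>*"
    using r[OF xyz(2)] r'[OF xyz(2)] r[OF xyz(3)] r'[OF xyz(3)] by auto
  have 2: "(x,z) \<in> (adjrel F)\<^sup>*" "(z,x) \<in> (adjrel F)\<^sup>*"
    using rtrancl_trans[OF 1(1) 1(3)] rtrancl_trans[OF 1(4) 1(2)] by auto
  have 3: "(x,x) \<in> (adjrel F)\<^sup>*" "(y,y) \<in> (adjrel F)\<^sup>*" "(z,z) \<in> (adjrel F)\<^sup>*"
    by auto
  have "v = x \<or> v = y \<or> v = z" using v xyz(1) by auto
  thus "S \<subseteq> component F v" unfolding xyz(1) component_def using 1 2 3 by auto
qed

lemma factorI:
  assumes "F \<subseteq> E" "\<And>v. v \<in> V \<Longrightarrow> \<exists>S. v \<in> S \<and> is_path3 F S \<and> closedF F S"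
  shows "lambda_factor V E F"
  unfolding lambda_factor_def
proof (intro conjI ballI)
  show "F \<subseteq> E" by (rule assms(1))
  fix v assume "v \<in> V"
  then obtain S where S: "v \<in> S" "is_path3 F S" "closedF F S" using assms(2) by blast
  hence "component F v = S" using comp_eq by metis
  thus "is_path3 F (component F v)" using S by simp
qed

lemma factorD:
  assumes f: "lambda_factor V E F" and e2: "\<forall>e\<in>E. \<exists>u w. e = {u,w}" and v: "v \<in> V"
  shows "v \<in> component F v" "is_path3 F (component F v)" "closedF F (component F v)"
proof -
  show "v \<in> component F v" by (simp add: component_def)
  show "is_path3 F (component F v)" using f v by (simp add: lambda_factor_def)
  show "closedF F (component F v)" unfolding closedF_def
  proof (intro ballI impI)
    fix e assume e: "e \<in> F" "e \<inter> component F v \<noteq> {}"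
    have "e \<in> E" using f e(1) by (auto simp: lambda_factor_def)
    then obtain u w where uw: "e = {u,w}" using e2 by blast
    have a1: "(u,w) \<in> adjrel F" "(w,u) \<in> adjrel F" using e uw
      by (auto simp: adjrel_def insert_commute)
    show "e \<subseteq> component F v"
    proof (cases "u \<in> component F v")
      case True
      then show ?thesis using a1 uw unfolding component_def
        by (auto intro: rtrancl_into_rtrancl)
    next
      case False
      hence "w \<in> component F v" using e uw by auto
      then show ?thesis using a1 uw unfolding component_def
        by (auto intro: rtrancl_into_rtrancl)
    qed
  qed
qed

lemma path3_card: assumes "is_path3 F S" shows "card S = 3"
proof -
  from assms obtain x y z where xyz: "x \<noteq> y" "y \<noteq> z" "x \<noteq> z" "S = {x,y,z}"
    unfolding is_path3_def by blast
  thus ?thesis by simp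
qed

lemma path3_edge: assumes "is_path3 F S" "u \<in> S"
  shows "\<exists>w. w \<noteq> u \<and> {u,w} \<in> F \<and> {u,w} \<subseteq> S"
proof -
  from assms(1) obtain x y z where xyz: "x \<noteq> y" "y \<noteq> z" "x \<noteq> z" "S = {x,y,z}"
     "{e \<in> F. e \<subseteq> S} = {{x, y}, {y, z}}" unfolding is_path3_def by blast
  have "{x,y} \<in> {e \<in> F. e \<subseteq> S}" "{y,z} \<in> {e \<in> F. e \<subseteq> S}" using xyz(5) by auto
  hence e: "{x,y} \<in> F" "{y,z} \<in> F" "{y,x} \<in> F" "{z,y} \<in> F" by (auto simp: insert_commute)
  have s: "{x,y} \<subseteq> S" "{y,z} \<subseteq> S" "{y,x} \<subseteq> S" "{z,y} \<subseteq> S" using xyz(4) by auto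
  have "u = x \<or> u = y \<or> u = z" using assms(2) xyz(4) by auto
  thus ?thesis
  proof (elim disjE)
    assume "u = x" thus ?thesis using e(1) s(1) xyz(1) by metis
  next
    assume "u = y" thus ?thesis using e(2) s(2) xyz(2) by metis
  next
    assume "u = z" thus ?thesis using e(4) s(4) xyz(2) by metis
  qed
qed

lemma path3_cross: assumes "is_path3 F S" "p \<in> S" "q \<in> S" "P p" "\<not> P q"
  shows "\<exists>u w. {u,w} \<in> F \<and> {u,w} \<subseteq> S \<and> P u \<and> \<not> P w"
proof -
  from assms(1) obtain x y z where xyz: "x \<noteq> y" "y \<noteq> z" "x \<noteq> z" "S = {x,y,z}"
     "{e \<in> F. e \<subseteq> S} = {{x, y}, {y, z}}" unfolding is_path3_def by blast
  have "{x,y} \<in> {e \<in> F. e \<subseteq> S}" "{y,z} \<in> {e \<in> F. e \<subseteq> S}" using xyz(5) by auto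
  hence e: "{x,y} \<in> F" "{y,z} \<in> F" "{y,x} \<in> F" "{z,y} \<in> F" by (auto simp: insert_commute)
  have s: "{x,y} \<subseteq> S" "{y,z} \<subseteq> S" "{y,x} \<subseteq> S" "{z,y} \<subseteq> S" using xyz(4) by auto
  show ?thesis
  proof (cases "P y")
    case True
    have "q = x \<or> q = z" using assms(3,5) True xyz(4) by auto
    then show ?thesis
    proof
      assume "q = x" thus ?thesis using True assms(5) e(3) s(3) by blast
    next
      assume "q = z" thus ?thesis using True assms(5) e(2) s(2) by blast
    qed
  next
    case False
    have "p = x \<or> p = z" using assms(2,4) False xyz(4) by auto
    then show ?thesis
    proof
      assume "p = x" thus ?thesis using False assms(4) e(1) s(1) by blast
    next
      assume "p = z" thus ?thesis using False assms(4) e(4) s(4) by blast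
    qed
  qed
qed

lemma path3_mono: "is_path3 F S \<Longrightarrow> {e\<in>F'. e \<subseteq> S} = {e\<in>F. e \<subseteq> S} \<Longrightarrow> is_path3 F' S"
  unfolding is_path3_def by simp




locale setting =
  fixes VA VB :: "'a set" and EA EB :: "'a set set" and a1 a2 b1 b2 :: 'a
  assumes gA: "simple_graph VA EA" and gB: "simple_graph VB EB"
    and disj: "VA \<inter> VB = {}" and aE: "{a1,a2} \<in> EA" and bE: "{b1,b2} \<in> EB"
begin

abbreviation "E \<equiv> join_edges EA a1 a2 EB b1 b2"

lemma basic: "a1 \<noteq> a2" "a1 \<in> VA" "a2 \<in> VA" "b1 \<noteq> b2" "b1 \<in> VB" "b2 \<in> VB"
  "finite VA" "finite VB"
proof -
  obtain u w where "u \<noteq> w" "u \<in> VA" "w \<in> VA" "{a1,a2} = {u,w}"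
    using gA aE unfolding simple_graph_def by blast
  thus "a1 \<noteq> a2" "a1 \<in> VA" "a2 \<in> VA" by (auto simp: doubleton_eq_iff)
  obtain u w where "u \<noteq> w" "u \<in> VB" "w \<in> VB" "{b1,b2} = {u,w}"
    using gB bE unfolding simple_graph_def by blast
  thus "b1 \<noteq> b2" "b1 \<in> VB" "b2 \<in> VB" by (auto simp: doubleton_eq_iff)
  show "finite VA" "finite VB" using gA gB by (auto simp: simple_graph_def)
qed

lemma EA_sub: "e \<in> EA \<Longrightarrow> \<exists>u w. u \<noteq> w \<and> u \<in> VA \<and> w \<in> VA \<and> e = {u,w}"
  using gA unfolding simple_graph_def by blast

lemma EB_sub: "e \<in> EB \<Longrightarrow> \<exists>u w. u \<noteq> w \<and> u \<in> VB \<and> w \<in> VB \<and> e = {u,w}"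
  using gB unfolding simple_graph_def by blast

lemma E_cases: "e \<in> E \<Longrightarrow> (e \<in> EA \<and> e \<subseteq> VA \<and> e \<noteq> {a1,a2}) \<or> (e \<in> EB \<and> e \<subseteq> VB \<and> e \<noteq> {b1,b2})
   \<or> e = {a1,b1} \<or> e = {a2,b2}"
proof -
  assume "e \<in> E"
  hence "(e \<in> EA \<and> e \<noteq> {a1,a2}) \<or> (e \<in> EB \<and> e \<noteq> {b1,b2}) \<or> e = {a1,b1} \<or> e = {a2,b2}"
    unfolding join_edges_def by blast
  moreover have "e \<in> EA \<Longrightarrow> e \<subseteq> VA" using EA_sub by blast
  moreover have "e \<in> EB \<Longrightarrow> e \<subseteq> VB" using EB_sub by blast
  ultimately show ?thesis by blast
qed

lemma E_two: "e \<in> E \<Longrightarrow> \<exists>u w. u \<noteq> w \<and> u \<in> VA \<union> VB \<and> w \<in> VA \<union> VB \<and> e = {u,w}"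
proof -
  assume e: "e \<in> E"
  have d: "a1 \<noteq> b1" "a2 \<noteq> b2" using basic disj by auto
  have "e \<in> EA \<or> e \<in> EB \<or> e = {a1,b1} \<or> e = {a2,b2}" using e unfolding join_edges_def by blast
  moreover have "e \<in> EA \<Longrightarrow> ?thesis" using EA_sub by blast
  moreover have "e \<in> EB \<Longrightarrow> ?thesis" using EB_sub by blast
  moreover have "e = {a1,b1} \<Longrightarrow> ?thesis" using d basic by blast
  moreover have "e = {a2,b2} \<Longrightarrow> ?thesis" using d basic by blast
  ultimately show ?thesis by blast
qed

lemma cross: "e \<in> E \<Longrightarrow> u \<in> e \<Longrightarrow> w \<in> e \<Longrightarrow> u \<in> VA \<Longrightarrow> w \<in> VB \<Longrightarrow> e = {a1,b1} \<or> e = {a2,b2}"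
  using E_cases disj by blast

lemma E_two': "\<forall>e\<in>E. \<exists>u w. e = {u,w}" using E_two by blast

end

locale fsetting = setting +
  fixes F
  assumes fac: "lambda_factor (VA \<union> VB) E F"
begin

abbreviation "K \<equiv> component F"

lemma FE: "F \<subseteq> E" using fac by (simp add: lambda_factor_def)

lemma Kv: assumes "v \<in> VA \<union> VB"
  shows "v \<in> K v" "is_path3 F (K v)" "closedF F (K v)" "K v \<subseteq> VA \<union> VB" "card (K v) = 3"
     "finite (K v)"
proof -
  show "v \<in> K v" "is_path3 F (K v)" "closedF F (K v)" using factorD[OF fac E_two' assms] by auto
  thus "card (K v) = 3" using path3_card by blast
  thus "finite (K v)" by (intro card_ge_0_finite) simp
  show "K v \<subseteq> VA \<union> VB"
  proof
    fix u assume u: "u \<in> K v"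
    obtain w where "{u,w} \<in> F" using path3_edge[OF \<open>is_path3 F (K v)\<close> u] by blast
    hence "{u,w} \<in> E" using FE by blast
    then obtain p q where "{u,w} = {p,q}" "p \<in> VA \<union> VB" "q \<in> VA \<union> VB" using E_two by blast
    thus "u \<in> VA \<union> VB" by (auto simp: doubleton_eq_iff)
  qed
qed

lemma Ksame: "v \<in> VA \<union> VB \<Longrightarrow> w \<in> K v \<Longrightarrow> K w = K v"
  by (rule comp_eq[OF Kv(2) _ Kv(3)])

lemma Kdisj: assumes "v \<in> VA \<union> VB" "w \<in> VA \<union> VB" "K v \<noteq> K w" shows "K v \<inter> K w = {}"
proof (rule ccontr)
  assume "K v \<inter> K w \<noteq> {}"
  then obtain u where u: "u \<in> K v" "u \<in> K w" by blast
  have "K u = K v" "K u = K w" using Ksame[OF assms(1) u(1)] Ksame[OF assms(2) u(2)] by auto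
  thus False using assms by simp
qed

lemma closedE: assumes "v \<in> VA \<union> VB" "e \<in> F" "u \<in> e" "u \<in> K v" shows "e \<subseteq> K v"
proof -
  have "\<forall>e\<in>F. e \<inter> K v \<noteq> {} \<longrightarrow> e \<subseteq> K v" using Kv(3)[OF assms(1)] unfolding closedF_def .
  moreover have "e \<inter> K v \<noteq> {}" using assms(3,4) by auto
  ultimately show ?thesis using assms(2) by simp
qed

lemma Kside: assumes v: "v \<in> VA \<union> VB" and n: "a1 \<notin> K v" "a2 \<notin> K v"
  shows "K v \<subseteq> VA \<or> K v \<subseteq> VB"
proof (rule ccontr)
  assume "\<not> ?thesis"
  then obtain p q where pq: "p \<in> K v" "q \<in> K v" "p \<in> VA" "q \<notin> VA" using Kv(4)[OF v] by blast
  obtain u w where uw: "{u,w} \<in> F" "{u,w} \<subseteq> K v" "u \<in> VA" "w \<notin> VA"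
    using path3_cross[OF Kv(2)[OF v] pq(1,2), where P="\<lambda>x. x \<in> VA"] pq by blast
  have "w \<in> VB" using uw Kv(4)[OF v] by auto
  hence "{u,w} = {a1,b1} \<or> {u,w} = {a2,b2}" using cross uw FE by blast
  thus False using uw n by (auto simp: doubleton_eq_iff)
qed

lemma Bcase: assumes c: "{a1,b1} \<notin> F" "{a2,b2} \<notin> F"
  shows "\<exists>F'. lambda_factor VB EB F' \<and> {b1,b2} \<notin> F'"
proof -
  define F' where "F' = {e\<in>F. e \<subseteq> VB}"
  have sub: "F' \<subseteq> EB - {{b1,b2}}"
  proof
    fix e assume e: "e \<in> F'"
    hence eE: "e \<in> E" "e \<subseteq> VB" "e \<in> F" using FE F'_def by auto
    obtain u w where "u \<noteq> w" "e = {u,w}" using E_two eE by blast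
    hence ne: "e \<noteq> {}" by auto
    have nA: "\<not> e \<subseteq> VA" using eE(2) ne disj by blast
    have n1: "e \<noteq> {a1,b1}" "e \<noteq> {a2,b2}" using c eE(3) by auto
    show "e \<in> EB - {{b1,b2}}" using E_cases[OF eE(1)] nA n1 by blast
  qed
  have "lambda_factor VB EB F'"
  proof (rule factorI)
    show "F' \<subseteq> EB" using sub by blast
    fix v assume v: "v \<in> VB"
    hence v': "v \<in> VA \<union> VB" by auto
    have SB: "K v \<subseteq> VB"
    proof (rule ccontr)
      assume "\<not> K v \<subseteq> VB"
      then obtain q where q: "q \<in> K v" "q \<notin> VB" by blast
      obtain u w where uw: "{u,w} \<in> F" "{u,w} \<subseteq> K v" "u \<in> VB" "w \<notin> VB"
        using path3_cross[OF Kv(2)[OF v'] Kv(1)[OF v'] q(1), where P="\<lambda>x. x \<in> VB"] q v by blast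
      have "w \<in> VA" using uw Kv(4)[OF v'] by auto
      have eq: "{u,w} = {w,u}" by blast
      have "{w,u} \<in> E" using uw(1) FE eq by auto
      hence "{w,u} = {a1,b1} \<or> {w,u} = {a2,b2}" using cross[of "{w,u}" w u] uw \<open>w \<in> VA\<close> by blast
      thus False using uw(1) c eq by metis
    qed
    have "is_path3 F' (K v)"
      by (rule path3_mono[OF Kv(2)[OF v']]) (use SB F'_def in auto)
    moreover have "closedF F' (K v)" using Kv(3)[OF v'] unfolding closedF_def F'_def by simp
    ultimately show "\<exists>S. v \<in> S \<and> is_path3 F' S \<and> closedF F' S" using Kv(1)[OF v'] by blast
  qed
  thus ?thesis using sub by blast
qed

end



context fsetting
begin

lemma Kfree: assumes v: "v \<in> VA" "v \<notin> K a1" "v \<notin> K a2"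
  shows "K v \<subseteq> VA" "a1 \<notin> K v" "a2 \<notin> K v" "K v \<inter> K a1 = {}" "K v \<inter> K a2 = {}"
proof -
  have v': "v \<in> VA \<union> VB" using v by simp
  have a: "a1 \<in> VA \<union> VB" "a2 \<in> VA \<union> VB" using basic by auto
  show n1: "a1 \<notin> K v"
  proof
    assume "a1 \<in> K v" hence "K a1 = K v" by (rule Ksame[OF v'])
    thus False using Kv(1)[OF v'] v(2) by simp
  qed
  show n2: "a2 \<notin> K v"
  proof
    assume "a2 \<in> K v" hence "K a2 = K v" by (rule Ksame[OF v'])
    thus False using Kv(1)[OF v'] v(3) by simp
  qed
  have "\<not> K v \<subseteq> VB" using Kv(1)[OF v'] v(1) disj by blast
  thus "K v \<subseteq> VA" using Kside[OF v' n1 n2] by blast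
  show "K v \<inter> K a1 = {}"
  proof (rule ccontr)
    assume "K v \<inter> K a1 \<noteq> {}"
    then obtain w where w: "w \<in> K v" "w \<in> K a1" by blast
    have "K w = K v" "K w = K a1" using Ksame[OF v' w(1)] Ksame[OF a(1) w(2)] by auto
    thus False using Kv(1)[OF v'] v(2) by simp
  qed
  show "K v \<inter> K a2 = {}"
  proof (rule ccontr)
    assume "K v \<inter> K a2 \<noteq> {}"
    then obtain w where w: "w \<in> K v" "w \<in> K a2" by blast
    have "K w = K v" "K w = K a2" using Ksame[OF v' w(1)] Ksame[OF a(2) w(2)] by auto
    thus False using Kv(1)[OF v'] v(3) by simp
  qed
qed

lemma count: assumes "card VA mod 3 = 0" shows "card (VA \<inter> (K a1 \<union> K a2)) mod 3 = 0"
proof -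
  define R where "R = VA - (K a1 \<union> K a2)"
  have KR: "K v \<subseteq> R" if v: "v \<in> R" for v
  proof -
    have v': "v \<in> VA" "v \<notin> K a1" "v \<notin> K a2" using v R_def by auto
    show ?thesis using Kfree[OF v'] unfolding R_def by blast
  qed
  have RV: "\<And>v. v \<in> R \<Longrightarrow> v \<in> VA \<union> VB" using R_def by auto
  have U: "\<Union> (K ` R) = R"
  proof
    show "\<Union> (K ` R) \<subseteq> R" using KR by blast
    show "R \<subseteq> \<Union> (K ` R)"
    proof
      fix v assume "v \<in> R" thus "v \<in> \<Union> (K ` R)" using Kv(1)[OF RV] by blast
    qed
  qed
  have fR: "finite R" using basic(7) R_def by simp
  have "3 * card (K ` R) = card (\<Union> (K ` R))"
  proof (rule card_partition)
    show "finite (K ` R)" using fR by simp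
    show "finite (\<Union> (K ` R))" using U fR by simp
    show "card c = 3" if "c \<in> K ` R" for c using Kv(5)[OF RV] that by blast
    show "c1 \<inter> c2 = {}" if "c1 \<in> K ` R" "c2 \<in> K ` R" "c1 \<noteq> c2" for c1 c2
      using Kdisj RV that by blast
  qed
  hence "3 * card (K ` R) = card R" using U by simp
  hence cR: "card R mod 3 = 0" by (metis mod_mult_self1_is_0)
  have "VA = R \<union> (VA \<inter> (K a1 \<union> K a2))" "R \<inter> (VA \<inter> (K a1 \<union> K a2)) = {}"
    unfolding R_def by blast+
  hence "card VA = card R + card (VA \<inter> (K a1 \<union> K a2))"
    using card_Un_disjoint basic(7) fR by (metis finite_Int)
  thus ?thesis using cR assms by presburger
qed

lemma c1free: assumes "card (VA \<inter> K a1) = 3" shows "{a1,b1} \<notin> F"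
proof
  assume c: "{a1,b1} \<in> F"
  have a: "a1 \<in> VA \<union> VB" using basic by auto
  have "VA \<inter> K a1 = K a1"
    by (rule card_subset_eq) (use Kv(5,6)[OF a] assms in auto)
  moreover have "{a1,b1} \<subseteq> K a1" using closedE[OF a c _ Kv(1)[OF a]] by simp
  ultimately show False using basic disj by blast
qed

lemma c2free: assumes "card (VA \<inter> K a2) = 3" shows "{a2,b2} \<notin> F"
proof
  assume c: "{a2,b2} \<in> F"
  have a: "a2 \<in> VA \<union> VB" using basic by auto
  have "VA \<inter> K a2 = K a2"
    by (rule card_subset_eq) (use Kv(5,6)[OF a] assms in auto)
  moreover have "{a2,b2} \<subseteq> K a2" using closedE[OF a c _ Kv(1)[OF a]] by simp
  ultimately show False using basic disj by blast
qed

lemma nbounds: "1 \<le> card (VA \<inter> K a1)" "card (VA \<inter> K a1) \<le> 3"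
  "1 \<le> card (VA \<inter> K a2)" "card (VA \<inter> K a2) \<le> 3"
proof -
  have a: "a1 \<in> VA \<union> VB" "a2 \<in> VA \<union> VB" using basic by auto
  have "card (VA \<inter> K a1) \<le> card (K a1)" by (rule card_mono) (use Kv(6)[OF a(1)] in auto)
  thus "card (VA \<inter> K a1) \<le> 3" using Kv(5)[OF a(1)] by simp
  have "card (VA \<inter> K a2) \<le> card (K a2)" by (rule card_mono) (use Kv(6)[OF a(2)] in auto)
  thus "card (VA \<inter> K a2) \<le> 3" using Kv(5)[OF a(2)] by simp
  have "0 < card (VA \<inter> K a1)" using Kv(1,6)[OF a(1)] basic(2)
    by (metis IntI card_gt_0_iff empty_iff finite_Int)
  thus "1 \<le> card (VA \<inter> K a1)" by simp
  have "0 < card (VA \<inter> K a2)" using Kv(1,6)[OF a(2)] basic(3)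
    by (metis IntI card_gt_0_iff empty_iff finite_Int)
  thus "1 \<le> card (VA \<inter> K a2)" by simp
qed

end



context fsetting
begin

lemma MIX: assumes n1: "card (VA \<inter> K a1) = 1" and n2: "card (VA \<inter> K a2) = 2"
  and d: "K a1 \<inter> K a2 = {}"
  shows "\<exists>F'. lambda_factor VA EA F' \<and> {a1,a2} \<in> F'"
proof -
  have a: "a1 \<in> VA \<union> VB" "a2 \<in> VA \<union> VB" using basic by auto
  have A1: "VA \<inter> K a1 = {a1}"
  proof -
    obtain p where "VA \<inter> K a1 = {p}" using n1 card_1_singletonE by blast
    moreover have "a1 \<in> VA \<inter> K a1" using Kv(1)[OF a(1)] basic by simp
    ultimately show ?thesis by simp
  qed
  obtain x where x: "x \<noteq> a2" "VA \<inter> K a2 = {a2,x}"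
  proof -
    obtain p q where pq: "VA \<inter> K a2 = {p,q}" "p \<noteq> q" using n2 card_2_iff by metis
    have "a2 \<in> VA \<inter> K a2" using Kv(1)[OF a(2)] basic by simp
    hence "a2 = p \<or> a2 = q" using pq by simp
    thus ?thesis
    proof
      assume "a2 = p" thus ?thesis using that[of q] pq by simp
    next
      assume "a2 = q" thus ?thesis using that[of p] pq by (simp add: insert_commute)
    qed
  qed
  have xK: "x \<in> VA" "x \<in> K a2" using x(2) by blast+
  have xa1: "x \<noteq> a1" using xK(2) d Kv(1)[OF a(1)] by blast
  have "\<not> K a2 \<subseteq> VA"
  proof
    assume "K a2 \<subseteq> VA"
    hence "VA \<inter> K a2 = K a2" by blast
    thus False using n2 Kv(5)[OF a(2)] by simp
  qed
  then obtain t where t: "t \<in> K a2" "t \<notin> VA" by blast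
  have tB: "t \<in> VB" using t Kv(4)[OF a(2)] by blast
  have K2: "K a2 = {a2,x,t}"
  proof (rule sym, rule card_subset_eq)
    show "finite (K a2)" using Kv(6)[OF a(2)] .
    show "{a2,x,t} \<subseteq> K a2" using Kv(1)[OF a(2)] xK t by blast
    have "t \<noteq> a2" "t \<noteq> x" using t basic xK by auto
    thus "card {a2,x,t} = card (K a2)" using x(1) Kv(5)[OF a(2)] by simp
  qed
  have xa2F: "{x,a2} \<in> F"
  proof -
    obtain w where w: "w \<noteq> x" "{x,w} \<in> F" "{x,w} \<subseteq> K a2"
      using path3_edge[OF Kv(2)[OF a(2)] xK(2)] by blast
    have "w = a2 \<or> w = t" using w K2 by auto
    moreover have "w \<noteq> t"
    proof
      assume wt: "w = t"
      have "{x,t} \<in> E" using w(2) wt FE by blast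
      hence "{x,t} = {a1,b1} \<or> {x,t} = {a2,b2}" using cross[of "{x,t}" x t] xK(1) tB by simp
      moreover have "a1 \<noteq> t" "x \<noteq> b2" using basic t xK(1) disj by auto
      ultimately show False using xa1 x(1) by (auto simp: doubleton_eq_iff)
    qed
    ultimately show ?thesis using w(2) by simp
  qed
  define F' where "F' = {e\<in>F. e \<subseteq> VA} \<union> {{a1,a2}}"
  have a12: "{a1,a2} \<in> F'" unfolding F'_def by simp
  have F'EA: "F' \<subseteq> EA"
  proof
    fix e assume e: "e \<in> F'"
    show "e \<in> EA"
    proof (cases "e = {a1,a2}")
      case True thus ?thesis using aE by simp
    next
      case False
      hence eF: "e \<in> F" "e \<subseteq> VA" using e F'_def by auto
      hence eE: "e \<in> E" using FE by blast
      obtain u w where "u \<noteq> w" "e = {u,w}" using E_two[OF eE] by blast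
      hence ne: "\<not> e \<subseteq> VB" using eF(2) disj by blast
      have "e \<noteq> {a1,b1}" "e \<noteq> {a2,b2}" using eF(2) basic disj by blast+
      thus ?thesis using E_cases[OF eE] ne by blast
    qed
  qed
  have two: "\<exists>u w. u \<noteq> w \<and> e = {u,w}" if "e \<in> F" for e using E_two that FE by blast
  define S0 where "S0 = {a1,a2,x}"
  have S0path: "is_path3 F' S0"
    unfolding is_path3_def
  proof (intro exI conjI)
    show "x \<noteq> a2" "a2 \<noteq> a1" "x \<noteq> a1" using x(1) basic(1) xa1 by auto
    show "S0 = {x,a2,a1}" unfolding S0_def by auto
    show "{e \<in> F'. e \<subseteq> S0} = {{x, a2}, {a2, a1}}"
    proof (rule set_eqI, rule iffI)
      fix e assume "e \<in> {{x, a2}, {a2, a1}}"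
      moreover have "{x,a2} \<in> F'" "{x,a2} \<subseteq> S0" using xa2F xK(1) basic unfolding F'_def S0_def by auto
      moreover have "{a2,a1} \<in> F'" "{a2,a1} \<subseteq> S0" using a12 unfolding S0_def by (auto simp: insert_commute)
      ultimately show "e \<in> {e \<in> F'. e \<subseteq> S0}" by auto
    next
      fix e assume e: "e \<in> {e \<in> F'. e \<subseteq> S0}"
      show "e \<in> {{x, a2}, {a2, a1}}"
      proof (cases "e = {a1,a2}")
        case True thus ?thesis by (simp add: insert_commute)
      next
        case False
        hence eF: "e \<in> F" "e \<subseteq> VA" "e \<subseteq> S0" using e F'_def by auto
        obtain u w where uw: "u \<noteq> w" "e = {u,w}" using two[OF eF(1)] by blast
        have "a1 \<notin> e"
        proof
          assume "a1 \<in> e"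
          hence "e \<subseteq> K a1" using closedE[OF a(1) eF(1) _ Kv(1)[OF a(1)]] by simp
          hence "e \<subseteq> {a1}" using eF(2) A1 by blast
          thus False using uw by auto
        qed
        hence "e \<subseteq> {a2,x}" using eF(3) S0_def by auto
        thus ?thesis using uw by auto
      qed
    qed
  qed
  have S0closed: "closedF F' S0" unfolding closedF_def
  proof (intro ballI impI)
    fix e assume e: "e \<in> F'" "e \<inter> S0 \<noteq> {}"
    show "e \<subseteq> S0"
    proof (cases "e = {a1,a2}")
      case True thus ?thesis by (simp add: S0_def)
    next
      case False
      hence eF: "e \<in> F" "e \<subseteq> VA" using e F'_def by auto
      from e(2) obtain u where u: "u \<in> e" "u \<in> S0" by blast
      show ?thesis
      proof (cases "u = a1")
        case True
        hence "e \<subseteq> K a1" using closedE[OF a(1) eF(1) u(1)] Kv(1)[OF a(1)] by simp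
        hence "e \<subseteq> {a1}" using eF(2) A1 by blast
        thus ?thesis by (auto simp: S0_def)
      next
        case False
        hence "u \<in> K a2" using u(2) S0_def Kv(1)[OF a(2)] xK(2) by auto
        hence "e \<subseteq> K a2" using closedE[OF a(2) eF(1) u(1)] by simp
        hence "e \<subseteq> {a2,x}" using eF(2) x(2) by blast
        thus ?thesis by (auto simp: S0_def)
      qed
    qed
  qed
  have "lambda_factor VA EA F'"
  proof (rule factorI[OF F'EA])
    fix v assume v: "v \<in> VA"
    show "\<exists>S. v \<in> S \<and> is_path3 F' S \<and> closedF F' S"
    proof (cases "v \<in> K a1 \<or> v \<in> K a2")
      case True
      hence "v \<in> VA \<inter> K a1 \<or> v \<in> VA \<inter> K a2" using v by blast
      hence "v \<in> S0" using A1 x(2) S0_def by auto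
      thus ?thesis using S0path S0closed by blast
    next
      case False
      hence v': "v \<in> VA" "v \<notin> K a1" "v \<notin> K a2" using v by auto
      have vv: "v \<in> VA \<union> VB" using v by simp
      note kf = Kfree[OF v']
      have "is_path3 F' (K v)"
      proof (rule path3_mono[OF Kv(2)[OF vv]])
        show "{e \<in> F'. e \<subseteq> K v} = {e \<in> F. e \<subseteq> K v}"
        proof (rule set_eqI)
          fix e show "e \<in> {e \<in> F'. e \<subseteq> K v} \<longleftrightarrow> e \<in> {e \<in> F. e \<subseteq> K v}"
            using kf(1,2) unfolding F'_def by auto
        qed
      qed
      moreover have "closedF F' (K v)" unfolding closedF_def
      proof (intro ballI impI)
        fix e assume e: "e \<in> F'" "e \<inter> K v \<noteq> {}"
        have "e \<noteq> {a1,a2}" using e(2) kf(2,3) by auto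
        hence eF: "e \<in> F" using e(1) F'_def by auto
        from e(2) obtain u where "u \<in> e" "u \<in> K v" by blast
        thus "e \<subseteq> K v" using closedE[OF vv eF] by blast
      qed
      ultimately show ?thesis using Kv(1)[OF vv] by blast
    qed
  qed
  thus ?thesis using a12 by blast
qed

end



theorem mainTheorem13:
  fixes VA VB :: "'a set" and EA EB :: "'a set set" and a1 a2 b1 b2 :: 'a
  assumes "cubic VA EA" and "cubic VB EB"
    and "VA \<inter> VB = {}"
    and "card VA mod 6 = 0" and "card VB mod 6 = 0"
    and "{a1, a2} \<in> EA" and "{b1, b2} \<in> EB"
    and "\<not> (\<exists>F. lambda_factor VA EA F \<and> {a1, a2} \<in> F)"
    and "\<not> (\<exists>F. lambda_factor VB EB F \<and> {b1, b2} \<notin> F)"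
  shows "card (join_verts VA VB) mod 6 = 0 \<and>
         \<not> (\<exists>F. lambda_factor (join_verts VA VB) (join_edges EA a1 a2 EB b1 b2) F)"
proof
  have gA: "simple_graph VA EA" and gB: "simple_graph VB EB" using assms(1,2) by (auto simp: cubic_def)
  interpret s: setting VA VB EA EB a1 a2 b1 b2
    using gA gB assms(3,6,7) by unfold_locales
  have "card (VA \<union> VB) = card VA + card VB" using card_Un_disjoint s.basic(7,8) assms(3) by blast
  thus "card (join_verts VA VB) mod 6 = 0" using assms(4,5) unfolding join_verts_def by presburger
  show "\<not> (\<exists>F. lambda_factor (join_verts VA VB) (join_edges EA a1 a2 EB b1 b2) F)"
  proof
    assume "\<exists>F. lambda_factor (join_verts VA VB) (join_edges EA a1 a2 EB b1 b2) F"
    then obtain F where F: "lambda_factor (VA \<union> VB) (join_edges EA a1 a2 EB b1 b2) F"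
      unfolding join_verts_def by blast
    interpret f: fsetting VA VB EA EB a1 a2 b1 b2 F
      using F by unfold_locales
    have c3: "card VA mod 3 = 0" using assms(4) by presburger
    have cnt: "card (VA \<inter> (component F a1 \<union> component F a2)) mod 3 = 0" by (rule f.count[OF c3])
    note nb = f.nbounds
    have Bfail: False if "card (VA \<inter> component F a1) = 3" "card (VA \<inter> component F a2) = 3"
      using f.Bcase[OF f.c1free[OF that(1)] f.c2free[OF that(2)]] assms(9) by blast
    have a: "a1 \<in> VA \<union> VB" "a2 \<in> VA \<union> VB" using s.basic by auto
    show False
    proof (cases "component F a1 = component F a2")
      case True
      hence "card (VA \<inter> component F a1) mod 3 = 0" using cnt by simp
      hence "card (VA \<inter> component F a1) = 3" using nb(1,2) by presburger
      thus False using Bfail True by simp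
    next
      case False
      have d: "component F a1 \<inter> component F a2 = {}" by (rule f.Kdisj[OF a False])
      have "card (VA \<inter> (component F a1 \<union> component F a2)) =
            card (VA \<inter> component F a1) + card (VA \<inter> component F a2)"
      proof -
        have "VA \<inter> (component F a1 \<union> component F a2) = (VA \<inter> component F a1) \<union> (VA \<inter> component F a2)" by blast
        moreover have "(VA \<inter> component F a1) \<inter> (VA \<inter> component F a2) = {}" using d by blast
        ultimately show ?thesis using card_Un_disjoint s.basic(7) by (metis finite_Int)
      qed
      hence "(card (VA \<inter> component F a1) + card (VA \<inter> component F a2)) mod 3 = 0" using cnt by simp
      hence "(card (VA \<inter> component F a1) = 3 \<and> card (VA \<inter> component F a2) = 3) \<or>
             (card (VA \<inter> component F a1) = 1 \<and> card (VA \<inter> component F a2) = 2) \<or>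
             (card (VA \<inter> component F a1) = 2 \<and> card (VA \<inter> component F a2) = 1)"
        using nb by presburger
      moreover have False if "card (VA \<inter> component F a1) = 1" "card (VA \<inter> component F a2) = 2"
        using f.MIX[OF that d] assms(8) by blast
      moreover have False if "card (VA \<inter> component F a1) = 2" "card (VA \<inter> component F a2) = 1"
      proof -
        have je: "join_edges EA a2 a1 EB b2 b1 = join_edges EA a1 a2 EB b1 b2"
          unfolding join_edges_def by (simp add: insert_commute)
        interpret g: fsetting VA VB EA EB a2 a1 b2 b1 F
          apply unfold_locales
          using gA gB assms(3,6,7) F je by (auto simp: insert_commute)
        have "\<exists>F'. lambda_factor VA EA F' \<and> {a2,a1} \<in> F'"
          using g.MIX that d by (simp add: Int_commute)
        thus False using assms(8) by (simp add: insert_commute)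
      qed
      ultimately show False using Bfail by blast
    qed
  qed
qed


end
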